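(* Let $\theta>1$, $r\in(\theta^{-1},\theta^{-1/2}]$ and $s=\max\big(1,\frac{\ln\theta}{\ln(r\theta)}-2\big)$. Let $(P_1,\dots,P_n)$ be a random price sequence with values in $[1,\theta]$ whose maximum $P^*$ has law $F$, and let $Y$ be a random prediction with law $G$ on $[1,\theta]$, independent of the prices. Define $\Lambda(z)=\int\mathcal{E}(z,y)^s\,\mathrm{d}G(y)$ and $\Upsilon(y)=\frac{\int z\,\mathcal{E}(z,y)^s\,\mathrm{d}F(z)}{\mathbb{E}[P^*]}$. Then \[ \frac{\mathbb{E}[\mathsf{A}^1_r(P,Y)]}{\mathbb{E}[P^*]}\ \ge\ \frac1{r\theta}\int\Upsilon(y)\,\mathrm{d}G(y)\ =\ \frac{1}{r\theta}\int\frac{z\,\Lambda(z)}{\mathbb{E}[P^*]}\,\mathrm{d}F(z). \]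
   Context: One-max search: fix $\theta>1$. Prices $p_1,\dots,p_n\in[1,\theta]$ are revealed one at a time; the algorithm receives at the start a prediction $y\in[1,\theta]$ of the maximum price. At each step it irrevocably accepts the current price (payoff = that price) or rejects it; if nothing is accepted the payoff is $1$. Let $\varphi_r(z)=\frac{r\theta-1}{1-r}+\frac{1-r^2\theta}{1-r}\cdot\frac{z}{r\theta}$ and $\Phi^1_r(z)=\max(r\theta,\varphi_r(z))$; $\mathsf{A}^1_r$ accepts the first price $p_i\ge\Phi^1_r(y)$, and $\mathsf{A}^1_r(P,Y)$ is its payoff on the realized prices and prediction. $\mathcal{E}(a,b)=\min\{a/b,b/a\}$. *)

theory Defs
  imports "HOL-Probability.Probability"
begin

definition Eff :: "real \<Rightarrow> real \<Rightarrow> real" where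
  "Eff a b = min (a / b) (b / a)"

definition phi_r :: "real \<Rightarrow> real \<Rightarrow> real \<Rightarrow> real" where
  "phi_r \<theta> r z = (r * \<theta> - 1) / (1 - r) + (1 - r^2 * \<theta>) / (1 - r) * (z / (r * \<theta>))"

definition Phi1 :: "real \<Rightarrow> real \<Rightarrow> real \<Rightarrow> real" where
  "Phi1 \<theta> r z = max (r * \<theta>) (phi_r \<theta> r z)"

definition threshold_payoff :: "real \<Rightarrow> real list \<Rightarrow> real" where
  "threshold_payoff thr ps = (case find (\<lambda>p. thr \<le> p) ps of Some p \<Rightarrow> p | None \<Rightarrow> 1)"

definition A1 :: "real \<Rightarrow> real \<Rightarrow> real list \<Rightarrow> real \<Rightarrow> real" where
  "A1 \<theta> r ps y = threshold_payoff (Phi1 \<theta> r y) ps"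

end

theory Submission
  imports Defs
begin

lemma holder2:
  fixes a b c d l :: real
  assumes "0 \<le> l" "l \<le> 1" "a > 0" "b > 0" "c > 0" "d > 0"
  shows "a powr (1-l) * b powr l + c powr (1-l) * d powr l \<le> (a+c) powr (1-l) * (b+d) powr l"
proof -
  have y1: "(a/(a+c)) powr (1-l) * (b/(b+d)) powr l \<le> (1-l) * (a/(a+c)) + l * (b/(b+d))"
    using assms by (intro Youngs_inequality_0) auto
  have y2: "(c/(a+c)) powr (1-l) * (d/(b+d)) powr l \<le> (1-l) * (c/(a+c)) + l * (d/(b+d))"
    using assms by (intro Youngs_inequality_0) auto
  have s: "(1-l) * (a/(a+c)) + l * (b/(b+d)) + ((1-l) * (c/(a+c)) + l * (d/(b+d))) = 1"
  proof -
    have e1: "a/(a+c) + c/(a+c) = 1" "b/(b+d) + d/(b+d) = 1" using assms by (simp_all add: add_divide_distrib[symmetric])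
    have "(1-l) * (a/(a+c)) + l * (b/(b+d)) + ((1-l) * (c/(a+c)) + l * (d/(b+d))) = (1-l) * (a/(a+c) + c/(a+c)) + l * (b/(b+d) + d/(b+d))"
      by (simp add: algebra_simps)
    then show ?thesis using e1 by simp
  qed
  have "(a/(a+c)) powr (1-l) * (b/(b+d)) powr l + (c/(a+c)) powr (1-l) * (d/(b+d)) powr l \<le> 1"
    using y1 y2 s by linarith
  moreover have "(a/(a+c)) powr (1-l) * (b/(b+d)) powr l + (c/(a+c)) powr (1-l) * (d/(b+d)) powr l
     = (a powr (1-l) * b powr l + c powr (1-l) * d powr l) / ((a+c) powr (1-l) * (b+d) powr l)"
    using assms by (simp add: powr_divide field_simps)
  moreover have "(a+c) powr (1-l) * (b+d) powr l > 0" using assms by simp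
  ultimately show ?thesis by (simp add: divide_le_eq)
qed

lemma key:
  fixes \<alpha> \<beta> t \<theta> s y :: real
  assumes "\<alpha> > 0" "\<beta> > 0" "t > 1" "t < \<theta>" "\<alpha> + \<beta> * t = t" "\<alpha> + \<beta> * \<theta> = \<theta> / t"
    "ln \<theta> \<le> (s+2) * ln t" "s \<ge> 0" "t \<le> y" "y \<le> \<theta>"
  shows "(s+1) * ln (\<alpha> + \<beta> * y) \<le> ln t + s * ln y"
proof -
  define l where "l = ln (y/t) / ln (\<theta>/t)"
  have lt: "ln t > 0" using assms by simp
  have lq: "ln (\<theta>/t) > 0" using assms by simp
  have l0: "0 \<le> l" unfolding l_def using assms lq by (intro divide_nonneg_pos) auto
  have l1: "l \<le> 1" unfolding l_def using assms lq by (simp add: divide_le_eq_1 divide_right_mono)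
  have lny: "ln y = ln t + l * (ln \<theta> - ln t)"
    unfolding l_def using assms lq by (simp add: ln_div)
  have yeq: "y = t powr (1-l) * \<theta> powr l"
  proof -
    have "ln (t powr (1-l) * \<theta> powr l) = ln y" using assms lny
      by (simp add: ln_mult powr_def algebra_simps)
    then show ?thesis using assms by (simp add: ln_inj_iff)
  qed
  have "\<alpha> + \<beta> * y = \<alpha> powr (1-l) * \<alpha> powr l + (\<beta>*t) powr (1-l) * (\<beta>*\<theta>) powr l"
    using assms yeq by (simp add: powr_add[symmetric] powr_mult algebra_simps)
  also have "\<dots> \<le> (\<alpha> + \<beta>*t) powr (1-l) * (\<alpha> + \<beta>*\<theta>) powr l"
    using assms l0 l1 by (intro holder2) auto
  also have "\<dots> = t powr (1-l) * (\<theta>/t) powr l" using assms by simp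
  finally have h: "\<alpha> + \<beta> * y \<le> t powr (1-l) * (\<theta>/t) powr l" .
  have "ln (\<alpha> + \<beta> * y) \<le> ln (t powr (1-l) * (\<theta>/t) powr l)"
    using h assms by (subst ln_le_cancel_iff) (auto intro: add_pos_nonneg)
  also have "\<dots> = ln t + l * (ln \<theta> - 2 * ln t)"
    using assms by (simp add: ln_mult ln_powr ln_div algebra_simps)
  finally have h2: "ln (\<alpha> + \<beta> * y) \<le> ln t + l * (ln \<theta> - 2 * ln t)" .
  have "(s+1) * ln (\<alpha> + \<beta> * y) \<le> (s+1) * (ln t + l * (ln \<theta> - 2 * ln t))"
    using h2 assms by (intro mult_left_mono) auto
  also have "\<dots> = ln t + s * ln y - l * ((s+2) * ln t - ln \<theta>)"
    unfolding lny by (simp add: algebra_simps)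
  also have "\<dots> \<le> ln t + s * ln y"
    using l0 assms by (simp add: mult_nonneg_nonneg)
  finally show ?thesis .
qed


lemma basics:
  fixes \<theta> r :: real
  assumes "\<theta> > 1" "1 / \<theta> < r" "r \<le> 1 / sqrt \<theta>"
  shows "r > 0" "r < 1" "r * \<theta> > 1" "r^2 * \<theta> \<le> 1" "r * \<theta> < \<theta>"
proof -
  show r0: "r > 0" using assms by (smt (verit) divide_pos_pos)
  show "r * \<theta> > 1" using assms by (simp add: divide_less_eq mult.commute)
  have sq: "sqrt \<theta> > 1" using assms by simp
  show r1: "r < 1" using assms sq by (smt (verit) divide_less_eq_1_pos)
  have "r^2 \<le> (1 / sqrt \<theta>)^2" using assms r0 by (intro power_mono) auto
  then show "r^2 * \<theta> \<le> 1" using assms by (simp add: power_divide pos_le_divide_eq)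
  show "r * \<theta> < \<theta>" using r1 assms by simp
qed

lemma Eff_pos: "0 < p \<Longrightarrow> 0 < y \<Longrightarrow> 0 < Eff p y"
  by (simp add: Eff_def)

lemma Eff_le1: "0 < p \<Longrightarrow> 0 < y \<Longrightarrow> Eff p y \<le> 1"
  unfolding Eff_def by (cases "p \<le> y") (simp_all add: min_le_iff_disj divide_le_eq_1)

lemma p_Eff_le: "0 < p \<Longrightarrow> 0 < y \<Longrightarrow> p * Eff p y \<le> y"
  by (auto simp: Eff_def min_def field_simps)

lemma Eff_powr_le: "0 < p \<Longrightarrow> 0 < y \<Longrightarrow> s \<ge> 1 \<Longrightarrow> Eff p y powr s \<le> Eff p y"
  using powr_mono'[of 1 s "Eff p y"] Eff_pos[of p y] Eff_le1[of p y] by simp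

lemma pointwise:
  fixes \<theta> r s p y :: real
  assumes "\<theta> > 1" "1 / \<theta> < r" "r \<le> 1 / sqrt \<theta>"
    and s: "s = max 1 (ln \<theta> / ln (r * \<theta>) - 2)"
    and p: "1 \<le> p" "p \<le> \<theta>" and y: "1 \<le> y" "y \<le> \<theta>"
  shows "p * Eff p y powr s \<le> r * \<theta> * Phi1 \<theta> r y"
    and "p < Phi1 \<theta> r y \<Longrightarrow> p * Eff p y powr s \<le> r * \<theta>"
proof -
  note b = basics[OF assms(1-3)]
  define t where "t = r * \<theta>"
  have t1: "t > 1" "t < \<theta>" using b by (auto simp: t_def)
  have s1: "s \<ge> 1" using s by simp
  have pE: "p * Eff p y powr s \<le> p * Eff p y"
    using Eff_powr_le[of p y s] p y s1 by (intro mult_left_mono) auto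
  have pE2: "p * Eff p y powr s \<le> p"
    using Eff_powr_le[of p y s] Eff_le1[of p y] p y s1 by (intro mult_right_le_one_le) (auto intro: less_imp_le)
  define \<alpha> where "\<alpha> = (t - 1) / (1 - r)"
  define \<beta> where "\<beta> = (1 - r * t) / ((1 - r) * t)"
  have phi: "\<And>z. phi_r \<theta> r z = \<alpha> + \<beta> * z"
    using b by (simp add: phi_r_def \<alpha>_def \<beta>_def t_def power2_eq_square field_simps)
  have a0: "\<alpha> > 0" using b t1 by (simp add: \<alpha>_def)
  have rt: "r * t \<le> 1" using b by (simp add: t_def power2_eq_square mult.assoc)
  have b0: "\<beta> \<ge> 0" using b t1 rt by (simp add: \<beta>_def)
  have bl1: "\<beta> \<le> 1"
  proof -
    have "1 - r * t \<le> (1 - r) * t" using t1 by (simp add: algebra_simps)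
    then show ?thesis using b t1 by (simp add: \<beta>_def divide_le_eq_1)
  qed
  have phit: "\<alpha> + \<beta> * t = t"
  proof -
    have "\<beta> * t = (1 - r * t) / (1 - r)" using t1 b by (simp add: \<beta>_def)
    then have "\<alpha> + \<beta> * t = ((t - 1) + (1 - r * t)) / (1 - r)" unfolding \<alpha>_def by (simp only: add_divide_distrib)
    also have "\<dots> = t" using b by (simp add: field_simps)
    finally show ?thesis .
  qed
  have phith: "\<alpha> + \<beta> * \<theta> = \<theta> / t"
  proof -
    have tr: "\<theta> / t = 1 / r" using b t1 by (simp add: t_def)
    have "\<beta> * \<theta> = (1 - r * t) / (1 - r) * (\<theta> / t)" by (simp add: \<beta>_def)
    also have "\<dots> = ((1 - r * t) / r) / (1 - r)" using tr by simp
    finally have "\<alpha> + \<beta> * \<theta> = ((t - 1) + (1 - r * t) / r) / (1 - r)" unfolding \<alpha>_def by (simp only: add_divide_distrib)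
    also have "(t - 1) + (1 - r * t) / r = (1 - r) / r" using b by (simp add: field_simps)
    also have "(1 - r) / r / (1 - r) = 1 / r" using b by simp
    finally show ?thesis using tr by simp
  qed
  have phiy: "t * (\<alpha> + \<beta> * y) \<ge> y"
  proof -
    have tb: "t * \<beta> = (1 - r * t) / (1 - r)" using t1 by (simp add: \<beta>_def)
    have "t * (\<alpha> + \<beta> * y) - y = t * \<alpha> + (t * \<beta>) * y - y" by (simp add: algebra_simps)
    also have "\<dots> = (t * (t - 1) + (1 - r * t) * y - (1 - r) * y) / (1 - r)"
    proof -
      have d: "1 - r \<noteq> 0" using b by simp
      have "t * \<alpha> = t * (t - 1) / (1 - r)" by (simp add: \<alpha>_def)
      moreover have "y = (1 - r) * y / (1 - r)" using d by simp
      ultimately have "t * \<alpha> + (t * \<beta>) * y - y = t * (t - 1) / (1 - r) + (1 - r * t) * y / (1 - r) - (1 - r) * y / (1 - r)"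
        unfolding tb by simp
      also have "\<dots> = (t * (t - 1) + (1 - r * t) * y - (1 - r) * y) / (1 - r)"
        by (simp only: add_divide_distrib diff_divide_distrib)
      finally show ?thesis .
    qed
    also have "t * (t - 1) + (1 - r * t) * y - (1 - r) * y = (t - 1) * (t - r * y)" by (simp add: algebra_simps)
    finally have "t * (\<alpha> + \<beta> * y) - y = (t - 1) * (t - r * y) / (1 - r)" .
    moreover have "r * y \<le> t" using y b by (simp add: t_def)
    ultimately show ?thesis using b t1 by (smt (verit) divide_nonneg_pos mult_nonneg_nonneg)
  qed
  show "p * Eff p y powr s \<le> r * \<theta> * Phi1 \<theta> r y"
  proof -
    have "p * Eff p y powr s \<le> y" using pE p_Eff_le[of p y] p y by linarith
    also have "y \<le> t * Phi1 \<theta> r y"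
      using phiy t1 by (smt (verit) Phi1_def phi mult_left_mono)
    finally show ?thesis by (simp add: t_def)
  qed
  assume lt: "p < Phi1 \<theta> r y"
  show "p * Eff p y powr s \<le> r * \<theta>"
  proof (cases "p \<le> t")
    case True then show ?thesis using pE2 by (simp add: t_def)
  next
    case False
    then have pphi: "p < \<alpha> + \<beta> * y" using lt by (simp add: Phi1_def phi t_def)
    show ?thesis
    proof (cases "y \<le> p")
      case True
      have "y / p \<le> 1" "1 \<le> p / y" using True p y by auto
      then have "Eff p y = y / p" unfolding Eff_def by (simp add: min_absorb2)
      then have "p * Eff p y = y" using p by simp
      moreover have "y < t"
      proof (rule ccontr)
        assume "\<not> y < t"
        then have "\<beta> * (y - t) \<le> y - t" using bl1 b0 by (intro mult_left_le_one_le) auto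
        then have "(\<alpha> + \<beta> * y) \<le> y" using phit by (simp add: algebra_simps)
        then show False using pphi True by simp
      qed
      ultimately show ?thesis using pE by (simp add: t_def)
    next
      case False
      then have pl: "p < y" by simp
      have b1: "\<beta> > 0"
      proof (rule ccontr)
        assume "\<not> \<beta> > 0" then have "\<beta> = 0" using b0 by simp
        then show False using pphi phit \<open>\<not> p \<le> t\<close> by simp
      qed
      have ty: "t \<le> y"
      proof (rule ccontr)
        assume "\<not> t \<le> y"
        then have "\<alpha> + \<beta> * y \<le> t" using phit b1 by (smt (verit) mult_left_mono)
        then show False using pphi \<open>\<not> p \<le> t\<close> by simp
      qed
      have lnt: "ln t > 0" using t1 by simp
      have lth: "ln \<theta> \<le> (s+2) * ln t"
      proof -
        have "ln \<theta> / ln t - 2 \<le> s" using s by (simp add: t_def)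
        then have "ln \<theta> / ln t \<le> s + 2" by simp
        then show ?thesis using lnt by (simp add: divide_le_eq)
      qed
      have k: "(s+1) * ln (\<alpha> + \<beta> * y) \<le> ln t + s * ln y"
        using key[OF a0 b1 t1 phit phith lth _ ty y(2)] s1 by simp
      have "p / y \<le> 1" "1 \<le> y / p" using pl p by auto
      then have E: "Eff p y = p / y" unfolding Eff_def by (simp add: min_absorb1)
      have "ln (p * Eff p y powr s) = (s+1) * ln p - s * ln y"
        using E p pl by (simp add: ln_mult ln_powr ln_div algebra_simps)
      also have "\<dots> \<le> (s+1) * ln (\<alpha> + \<beta> * y) - s * ln y"
        using pphi p s1 by (auto intro!: mult_left_mono)
      also have "\<dots> \<le> ln t" using k by simp
      finally have "ln (p * Eff p y powr s) \<le> ln t" .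
      then have "p * Eff p y powr s \<le> t" using t1 p E pl by (simp add: ln_le_cancel_iff)
      then show ?thesis by (simp add: t_def)
    qed
  qed
qed


lemma tp_Nil[simp]: "threshold_payoff thr [] = 1"
  by (simp add: threshold_payoff_def)
lemma tp_Cons[simp]: "threshold_payoff thr (p # ps) = (if thr \<le> p then p else threshold_payoff thr ps)"
  by (simp add: threshold_payoff_def)

lemma tp_ge: "\<exists>p\<in>set ps. thr \<le> p \<Longrightarrow> thr \<le> threshold_payoff thr ps"
  by (induction ps) auto
lemma tp_none: "\<forall>p\<in>set ps. p < thr \<Longrightarrow> threshold_payoff thr ps = 1"
  by (induction ps) auto
lemma tp_range: "threshold_payoff thr ps = 1 \<or> threshold_payoff thr ps \<in> set ps"
  by (induction ps) auto

lemma tp_measurable: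
  assumes "\<And>i. i \<in> set xs \<Longrightarrow> P i \<in> borel_measurable M" "T \<in> borel_measurable M"
  shows "(\<lambda>\<omega>. threshold_payoff (T \<omega>) (map (\<lambda>i. P i \<omega>) xs)) \<in> borel_measurable M"
  using assms(1)
proof (induction xs)
  case Nil then show ?case by simp
next
  case (Cons i xs)
  then have [measurable]: "P i \<in> borel_measurable M"
    and IH[measurable]: "(\<lambda>\<omega>. threshold_payoff (T \<omega>) (map (\<lambda>i. P i \<omega>) xs)) \<in> borel_measurable M" by auto
  note [measurable] = assms(2)
  show ?case by simp measurable
qed

lemma Phi1_measurable[measurable]:
  assumes [measurable]: "Y \<in> borel_measurable M"
  shows "(\<lambda>\<omega>. Phi1 \<theta> r (Y \<omega>)) \<in> borel_measurable M"
  unfolding Phi1_def phi_r_def by measurable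

lemma Eff_measurable[measurable]: "(\<lambda>(y, z). z * Eff z y powr s) \<in> borel_measurable (borel \<Otimes>\<^sub>M borel)"
  unfolding Eff_def by measurable


theorem corollary3:
  fixes M :: "'a measure" and P :: "nat \<Rightarrow> 'a \<Rightarrow> real" and Y :: "'a \<Rightarrow> real"
    and \<theta> r s :: real and n :: nat
  assumes "prob_space M"
    and "\<theta> > 1" and "1 / \<theta> < r" and "r \<le> 1 / sqrt \<theta>"
    and "s = max 1 (ln \<theta> / ln (r * \<theta>) - 2)"
    and "n \<ge> 1"
    and "\<forall>i<n. P i \<in> borel_measurable M"
    and "\<forall>i<n. \<forall>\<omega>\<in>space M. P i \<omega> \<in> {1..\<theta>}"
    and "Y \<in> borel_measurable M"
    and "\<forall>\<omega>\<in>space M. Y \<omega> \<in> {1..\<theta>}"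
    and "prob_space.indep_set M {Y -` A \<inter> space M | A. A \<in> sets borel}
          {(\<lambda>\<omega>. \<lambda>i\<in>{..<n}. P i \<omega>) -` B \<inter> space M | B. B \<in> sets (PiM {..<n} (\<lambda>_. borel :: real measure))}"
  defines "Pstar \<equiv> (\<lambda>\<omega>. Max ((\<lambda>i. P i \<omega>) ` {..<n}))"
  shows "let F = distr M borel Pstar; G = distr M borel Y; EP = (\<integral>\<omega>. Pstar \<omega> \<partial>M);
             \<Lambda> = (\<lambda>z. \<integral>y. Eff z y powr s \<partial>G);
             \<Upsilon> = (\<lambda>y. (\<integral>z. z * Eff z y powr s \<partial>F) / EP)
         in (\<integral>\<omega>. A1 \<theta> r (map (\<lambda>i. P i \<omega>) [0..<n]) (Y \<omega>) \<partial>M) / EP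
              \<ge> 1 / (r * \<theta>) * (\<integral>y. \<Upsilon> y \<partial>G)
          \<and> 1 / (r * \<theta>) * (\<integral>y. \<Upsilon> y \<partial>G) = 1 / (r * \<theta>) * (\<integral>z. z * \<Lambda> z / EP \<partial>F)"
proof -
  interpret prob_space M by fact
  note b = basics[OF assms(2-4)]
  have Pm[measurable]: "\<And>i. i < n \<Longrightarrow> P i \<in> borel_measurable M" using assms(7) by auto
  note Ym[measurable] = assms(9)
  have Psm[measurable]: "Pstar \<in> borel_measurable M"
    unfolding Pstar_def by (rule borel_measurable_Max) auto
  have ne: "{..<n} \<noteq> {}" using assms(6) by (simp add: lessThan_empty_iff)
  have Psr: "1 \<le> Pstar \<omega> \<and> Pstar \<omega> \<le> \<theta>" if "\<omega> \<in> space M" for \<omega>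
  proof -
    have "Pstar \<omega> \<in> (\<lambda>i. P i \<omega>) ` {..<n}" unfolding Pstar_def using ne by (intro Max_in) auto
    then show ?thesis using assms(8) that by auto
  qed
  have Yr: "1 \<le> Y \<omega> \<and> Y \<omega> \<le> \<theta>" if "\<omega> \<in> space M" for \<omega> using assms(10) that by auto
  define Q where "Q = (\<lambda>\<omega>. \<lambda>i\<in>{..<n}. P i \<omega>)"
  have Qm: "Q \<in> measurable M (PiM {..<n} (\<lambda>_. borel :: real measure))"
    unfolding Q_def by (rule measurable_restrict) auto
  have Mxm: "(\<lambda>f. Max (f ` {..<n})) \<in> borel_measurable (PiM {..<n} (\<lambda>_. borel :: real measure))"
    using borel_measurable_Max[of "{..<n}" "\<lambda>i x. x i" "PiM {..<n} (\<lambda>_. borel :: real measure)"] by simp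
  have QP: "Max (Q \<omega> ` {..<n}) = Pstar \<omega>" for \<omega>
    by (simp add: Q_def Pstar_def)
  have iYP: "indep_var borel Y borel Pstar"
    unfolding indep_var_def indep_vars_def2
  proof
    show "\<forall>i\<in>UNIV. random_variable (case_bool borel borel i) (case_bool Y Pstar i)"
      by (auto split: bool.split)
    have ind: "indep_sets (case_bool {Y -` A \<inter> space M | A. A \<in> sets borel}
          {Q -` B \<inter> space M | B. B \<in> sets (PiM {..<n} (\<lambda>_. borel :: real measure))}) UNIV"
      using assms(11) unfolding indep_set_def Q_def by simp
    show "indep_sets (\<lambda>i. {case_bool Y Pstar i -` A \<inter> space M |A. A \<in> sets (case_bool borel borel i)}) UNIV"
    proof (rule indep_sets_mono_sets[OF ind])
      fix i :: bool
      show "{case_bool Y Pstar i -` A \<inter> space M |A. A \<in> sets (case_bool borel borel i)}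
         \<subseteq> case_bool {Y -` A \<inter> space M | A. A \<in> sets borel}
          {Q -` B \<inter> space M | B. B \<in> sets (PiM {..<n} (\<lambda>_. borel :: real measure))} i"
      proof (cases i)
        case True then show ?thesis by auto
      next
        case False
        show ?thesis
        proof
          fix S assume "S \<in> {case_bool Y Pstar i -` A \<inter> space M |A. A \<in> sets (case_bool borel borel i)}"
          then obtain A where A: "A \<in> sets borel" "S = Pstar -` A \<inter> space M" using False by auto
          let ?B = "(\<lambda>f. Max (f ` {..<n})) -` A \<inter> space (PiM {..<n} (\<lambda>_. borel :: real measure))"
          have "?B \<in> sets (PiM {..<n} (\<lambda>_. borel :: real measure))"
            using measurable_sets[OF Mxm A(1)] .
          moreover have "S = Q -` ?B \<inter> space M"
            using A(2) measurable_space[OF Qm] QP by auto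
          ultimately have mem: "S \<in> {Q -` B \<inter> space M | B. B \<in> sets (PiM {..<n} (\<lambda>_. borel :: real measure))}"
            by blast
          have iF: "i = False" using False by simp
          show "S \<in> case_bool {Y -` A \<inter> space M | A. A \<in> sets borel}
            {Q -` B \<inter> space M | B. B \<in> sets (PiM {..<n} (\<lambda>_. borel :: real measure))} i"
            unfolding iF bool.case(2) by (rule mem)
        qed
      qed
    qed
  qed
  define F where "F = distr M borel Pstar"
  define G where "G = distr M borel Y"
  define EP where "EP = (\<integral>\<omega>. Pstar \<omega> \<partial>M)"
  have GF: "G \<Otimes>\<^sub>M F = distr M (borel \<Otimes>\<^sub>M borel) (\<lambda>x. (Y x, Pstar x))"
    using iYP unfolding indep_var_distribution_eq F_def G_def by simp
  interpret GF: pair_prob_space G F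
    unfolding G_def F_def
    by (intro pair_prob_space.intro pair_sigma_finite.intro prob_space_distr prob_space_imp_sigma_finite) auto
  define g where "g = (\<lambda>(y::real, z::real). z * Eff z y powr s)"
  have gm[measurable]: "g \<in> borel_measurable (borel \<Otimes>\<^sub>M borel)" unfolding g_def by measurable
  have gb: "norm (g (Y \<omega>, Pstar \<omega>)) \<le> \<theta>" if "\<omega> \<in> space M" for \<omega>
  proof -
    have "0 < Pstar \<omega>" "0 < Y \<omega>" using Psr[OF that] Yr[OF that] by auto
    then have "0 \<le> Eff (Pstar \<omega>) (Y \<omega>) powr s" "Eff (Pstar \<omega>) (Y \<omega>) powr s \<le> 1"
      using Eff_powr_le[of "Pstar \<omega>" "Y \<omega>" s] Eff_le1[of "Pstar \<omega>" "Y \<omega>"] assms(5) by auto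
    moreover have "0 \<le> Pstar \<omega>" "Pstar \<omega> \<le> \<theta>" using Psr[OF that] by auto
    ultimately have h1: "0 \<le> Pstar \<omega> * Eff (Pstar \<omega>) (Y \<omega>) powr s"
       and h2: "Pstar \<omega> * Eff (Pstar \<omega>) (Y \<omega>) powr s \<le> Pstar \<omega>"
      by (auto intro: mult_right_le_one_le)
    have "norm (g (Y \<omega>, Pstar \<omega>)) = Pstar \<omega> * Eff (Pstar \<omega>) (Y \<omega>) powr s"
      using h1 by (simp add: g_def)
    then show ?thesis using h2 Psr[OF that] by linarith
  qed
  have intM: "integrable M (\<lambda>\<omega>. g (Y \<omega>, Pstar \<omega>))"
    by (rule integrable_const_bound[where B=\<theta>]) (use gb in auto)
  have intGF: "integrable (G \<Otimes>\<^sub>M F) g"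
    unfolding GF by (subst integrable_distr_eq) (use intM in auto)
  have eqGF: "integral\<^sup>L (G \<Otimes>\<^sub>M F) g = (\<integral>\<omega>. g (Y \<omega>, Pstar \<omega>) \<partial>M)"
    unfolding GF by (rule integral_distr) auto
  have it1: "(\<integral>y. (\<integral>z. z * Eff z y powr s \<partial>F) \<partial>G) = integral\<^sup>L (G \<Otimes>\<^sub>M F) g"
    using GF.integral_fst'[OF intGF] by (simp add: g_def)
  have it2: "(\<integral>z. (\<integral>y. z * Eff z y powr s \<partial>G) \<partial>F) = integral\<^sup>L (G \<Otimes>\<^sub>M F) g"
    using GF.integral_snd[of "\<lambda>y z. z * Eff z y powr s"] intGF by (simp add: g_def)
  have intPs: "integrable M Pstar"
    by (rule integrable_const_bound[where B=\<theta>]) (auto intro!: AE_I2 dest!: Psr)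
  have EP1: "EP \<ge> 1"
  proof -
    have "(\<integral>\<omega>. 1 \<partial>M) \<le> EP" unfolding EP_def
      by (rule integral_mono) (use intPs Psr in auto)
    then show ?thesis using prob_space by simp
  qed
  define A where "A = (\<lambda>\<omega>. A1 \<theta> r (map (\<lambda>i. P i \<omega>) [0..<n]) (Y \<omega>))"
  have Am: "A \<in> borel_measurable M"
    unfolding A_def A1_def by (rule tp_measurable) auto
  have Ar: "1 \<le> A \<omega> \<and> A \<omega> \<le> \<theta>" if "\<omega> \<in> space M" for \<omega>
    using tp_range[of "Phi1 \<theta> r (Y \<omega>)" "map (\<lambda>i. P i \<omega>) [0..<n]"] assms(2,8) that
    by (auto simp: A_def A1_def)
  have intA: "integrable M A"
    by (rule integrable_const_bound[where B=\<theta>]) (auto intro!: AE_I2 Am dest!: Ar)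
  have pw: "g (Y \<omega>, Pstar \<omega>) / (r * \<theta>) \<le> A \<omega>" if "\<omega> \<in> space M" for \<omega>
  proof -
    let ?thr = "Phi1 \<theta> r (Y \<omega>)"
    let ?ps = "map (\<lambda>i. P i \<omega>) [0..<n]"
    have setps: "set ?ps = (\<lambda>i. P i \<omega>) ` {..<n}" by auto
    have PsM: "Pstar \<omega> \<in> set ?ps" unfolding setps Pstar_def using ne by (intro Max_in) auto
    have Psge: "p \<le> Pstar \<omega>" if "p \<in> set ?ps" for p using that unfolding setps Pstar_def by auto
    have "g (Y \<omega>, Pstar \<omega>) \<le> r * \<theta> * A \<omega>"
    proof (cases "?thr \<le> Pstar \<omega>")
      case True
      then have "?thr \<le> A \<omega>" unfolding A_def A1_def using PsM by (intro tp_ge) auto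
      moreover have "g (Y \<omega>, Pstar \<omega>) \<le> r * \<theta> * ?thr"
        unfolding g_def using pointwise(1)[OF assms(2-5)] Psr[OF that] Yr[OF that] by auto
      ultimately show ?thesis using b by (smt (verit) mult_left_mono mult_pos_pos)
    next
      case False
      then have "A \<omega> = 1" unfolding A_def A1_def using Psge by (intro tp_none) force
      moreover have "g (Y \<omega>, Pstar \<omega>) \<le> r * \<theta>"
        unfolding g_def using pointwise(2)[OF assms(2-5)] Psr[OF that] Yr[OF that] False by auto
      ultimately show ?thesis by simp
    qed
    then show ?thesis using b by (simp add: divide_le_eq mult.commute)
  qed
  have main: "(\<integral>\<omega>. g (Y \<omega>, Pstar \<omega>) \<partial>M) / (r * \<theta>) \<le> integral\<^sup>L M A"
  proof -
    have "(\<integral>\<omega>. g (Y \<omega>, Pstar \<omega>) \<partial>M) / (r * \<theta>) = (\<integral>\<omega>. g (Y \<omega>, Pstar \<omega>) / (r * \<theta>) \<partial>M)" by simp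
    also have "\<dots> \<le> integral\<^sup>L M A"
      by (rule integral_mono) (use intM intA pw in auto)
    finally show ?thesis .
  qed
  have c1: "1 / (r * \<theta>) * (\<integral>y. (\<integral>z. z * Eff z y powr s \<partial>F) / EP \<partial>G) \<le> integral\<^sup>L M A / EP"
  proof -
    have "1 / (r * \<theta>) * (\<integral>y. (\<integral>z. z * Eff z y powr s \<partial>F) / EP \<partial>G)
        = ((\<integral>\<omega>. g (Y \<omega>, Pstar \<omega>) \<partial>M) / (r * \<theta>)) / EP"
      using it1 eqGF by simp
    also have "\<dots> \<le> integral\<^sup>L M A / EP"
      using main EP1 by (intro divide_right_mono) auto
    finally show ?thesis .
  qed
  have c2: "(\<integral>y. (\<integral>z. z * Eff z y powr s \<partial>F) / EP \<partial>G) = (\<integral>z. z * (\<integral>y. Eff z y powr s \<partial>G) / EP \<partial>F)"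
  proof -
    have "(\<integral>z. z * (\<integral>y. Eff z y powr s \<partial>G) / EP \<partial>F) = (\<integral>z. (\<integral>y. z * Eff z y powr s \<partial>G) \<partial>F) / EP"
      by simp
    then show ?thesis using it1 it2 by simp
  qed
  show ?thesis
    unfolding Let_def F_def[symmetric] G_def[symmetric] EP_def[symmetric] A_def[symmetric]
    using c1 c2 by simp
qed

end
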